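(* Let $\alpha\ge1$. There is a constant $C$ (depending on $\alpha$) such that the following holds. Let $N\ge2$, $k\in\{1,\dots,N-1\}$ and let $x,y\in\Omega_N$ with $x\le y$ coordinatewise and with $x_{k+1}>x_{k-1}$, $y_{k+1}>y_{k-1}$. Let $I^x=[x_{k-1},x_{k+1}]$, $I^y=[y_{k-1},y_{k+1}]$, $\nabla x_k=x_{k+1}-x_{k-1}$, $\nabla y_k=y_{k+1}-y_{k-1}$, $\delta\bar X_k=\frac{(y_{k-1}+y_{k+1})-(x_{k-1}+x_{k+1})}{2}$, and $$q=\|\mathrm{Beta}_\alpha(I^x)-\mathrm{Beta}_\alpha(I^y)\|_{TV},\qquad Q=\min\left(\frac{\delta\bar X_k}{\max(\nabla x_k,\nabla y_k)},1\right).$$ Then $C^{-1}Q\le q\le CQ$. Furthermore, there exists a constant $c_1>0$ (depending only on $\alpha$) such that $q\ge1-c_1$ implies $\max(|I^x|,|I^y|)\ge2|I^x\cap I^y|$.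
   Context: $\Omega_N=\{x\in\mathbb{R}^{N-1}:0\le x_1\le\dots\le x_{N-1}\le N\}$ with $x_0=0,x_N=N$. For an interval $I=[a,b]$ with $a<b$, $\mathrm{Beta}_\alpha(I)$ is the law with density $\frac{\Gamma(2\alpha)(u-a)^{\alpha-1}(b-u)^{\alpha-1}}{\Gamma(\alpha)^2(b-a)^{2\alpha-1}}\mathbf{1}_{[a,b]}(u)$. $|J|$ denotes the length of an interval $J$. *)

theory Defs
  imports "HOL-Probability.Probability"
begin

text \<open>Configuration space Omega_N: a point is a function x :: nat => real whose
  relevant coordinates are x 0 = 0, x 1, ..., x (N-1), x N = N (nondecreasing).\<close>
definition Omega :: "nat \<Rightarrow> (nat \<Rightarrow> real) \<Rightarrow> bool" where
  "Omega N x \<longleftrightarrow> x 0 = 0 \<and> x N = real N \<and> (\<forall>i<N. x i \<le> x (Suc i))"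

definition beta_density :: "real \<Rightarrow> real \<Rightarrow> real \<Rightarrow> real \<Rightarrow> real" where
  "beta_density \<alpha> a b u =
     (if a \<le> u \<and> u \<le> b then
        Gamma (2*\<alpha>) * (u - a) powr (\<alpha> - 1) * (b - u) powr (\<alpha> - 1)
          / (Gamma \<alpha> ^ 2 * (b - a) powr (2*\<alpha> - 1))
      else 0)"

definition Beta_law :: "real \<Rightarrow> real \<Rightarrow> real \<Rightarrow> real measure" where
  "Beta_law \<alpha> a b = density lborel (\<lambda>u. ennreal (beta_density \<alpha> a b u))"

definition tv_dist :: "real measure \<Rightarrow> real measure \<Rightarrow> real" where
  "tv_dist \<mu> \<nu> = (SUP A \<in> sets borel. \<bar>measure \<mu> A - measure \<nu> A\<bar>)"

definition len :: "real set \<Rightarrow> real" where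
  "len J = measure lborel J"

end

theory Submission
  imports Defs
begin

definition bt :: "real \<Rightarrow> real \<Rightarrow> real" where
  "bt \<alpha> s = s powr (\<alpha> - 1) * (1 - s) powr (\<alpha> - 1)"

definition KK :: "real \<Rightarrow> real" where
  "KK \<alpha> = Gamma (2*\<alpha>) / (Gamma \<alpha> ^ 2)"

lemma KK_pos: "\<alpha> > 0 \<Longrightarrow> KK \<alpha> > 0"
proof -
  assume a: "\<alpha> > 0"
  have "Gamma \<alpha> > 0" "Gamma (2*\<alpha>) > 0" using a by auto
  then show ?thesis unfolding KK_def by (intro divide_pos_pos) auto
qed

lemma KK_Beta: "\<alpha> > 0 \<Longrightarrow> KK \<alpha> * Beta \<alpha> \<alpha> = 1"
proof -
  assume a: "\<alpha> > 0"
  have g1: "Gamma \<alpha> > 0" and g2: "Gamma (2*\<alpha>) > 0" using a by auto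
  have "Beta \<alpha> \<alpha> = Gamma \<alpha> ^ 2 / Gamma (2*\<alpha>)"
    unfolding Beta_def power2_eq_square mult_2 by (rule refl)
  then show ?thesis unfolding KK_def using g1 g2 by simp
qed

lemma bt_int: "\<alpha> > 0 \<Longrightarrow> (bt \<alpha> has_integral Beta \<alpha> \<alpha>) {0..1}"
  unfolding bt_def[abs_def] using has_integral_Beta_real[of \<alpha> \<alpha>] by simp

lemma bt_sub:
  assumes a: "\<alpha> > 0" and s: "0 \<le> s0" "s0 \<le> 1"
  shows "(bt \<alpha> has_integral integral {0..s0} (bt \<alpha>)) {0..s0}"
proof -
  have "bt \<alpha> integrable_on {0..1}" using bt_int[OF a] by blast
  then have "bt \<alpha> integrable_on {0..s0}" by (rule integrable_subinterval_real) (use s in auto)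
  then show ?thesis by (simp add: has_integral_integral)
qed

lemma sub:
  assumes al: "\<alpha> > 0" and ab: "a < b" and s: "0 \<le> s0" "s0 \<le> 1"
  shows "((\<lambda>u. (u-a) powr (\<alpha>-1) * (b-u) powr (\<alpha>-1)) has_integral
           (b-a) powr (2*\<alpha>-1) * integral {0..s0} (bt \<alpha>)) {a..a+s0*(b-a)}"
proof -
  define I where "I = integral {0..s0} (bt \<alpha>)"
  define m where "m = 1/(b-a)"
  define c where "c = -a/(b-a)"
  have m: "m > 0" using ab by (simp add: m_def)
  have h: "(bt \<alpha> has_integral I) (cbox 0 s0)" using bt_sub[OF al s] by (simp add: I_def)
  note h2 = has_integral_affinity'[OF h m, of c]
  have e1: "(0 - c) /\<^sub>R m = a" using ab by (simp add: m_def c_def field_simps)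
  have e2: "(s0 - c) /\<^sub>R m = a + s0*(b-a)" using ab by (simp add: m_def c_def field_simps)
  have e3: "I /\<^sub>R m ^ DIM(real) = (b-a) * I" using ab by (simp add: m_def)
  have e4: "inverse m = b - a" using ab by (simp add: m_def)
  have h3: "((\<lambda>u. bt \<alpha> (m * u + c)) has_integral (b-a)*I) {a..a+s0*(b-a)}"
    using h2 e1 e2 e3 e4 by simp
  define P where "P = (b-a) powr (\<alpha>-1) * (b-a) powr (\<alpha>-1)"
  have h4: "((\<lambda>u. P * bt \<alpha> (m * u + c)) has_integral P*((b-a)*I)) {a..a+s0*(b-a)}"
    by (rule has_integral_mult_right[OF h3])
  have eq: "P * bt \<alpha> (m * u + c) = (u-a) powr (\<alpha>-1) * (b-u) powr (\<alpha>-1)"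
    if u: "u \<in> {a..a+s0*(b-a)}" for u
  proof -
    have "s0*(b-a) \<le> b-a" using s ab by (intro mult_left_le_one_le) auto
    then have ub: "u \<le> b" using u by simp
    have "m*u + c = (u-a)/(b-a)" by (simp add: m_def c_def diff_divide_distrib)
    moreover have "1 - (u-a)/(b-a) = (b-u)/(b-a)" using ab by (simp add: field_simps)
    ultimately have "bt \<alpha> (m*u+c) = ((u-a) powr (\<alpha>-1) / (b-a) powr (\<alpha>-1)) * ((b-u) powr (\<alpha>-1) / (b-a) powr (\<alpha>-1))"
      unfolding bt_def using u ub ab by (simp add: powr_divide)
    moreover have "(b-a) powr (\<alpha>-1) > 0" using ab by simp
    ultimately show ?thesis unfolding P_def by simp
  qed
  have val: "P*((b-a)*I) = (b-a) powr (2*\<alpha>-1) * I"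
  proof -
    have "P*(b-a) = (b-a) powr ((\<alpha>-1) + (\<alpha>-1) + 1)" unfolding P_def using ab by (simp only: powr_add powr_one_gt_zero_iff) simp
    also have "(\<alpha>-1) + (\<alpha>-1) + 1 = 2*\<alpha>-1" by simp
    finally have "P*(b-a) = (b-a) powr (2*\<alpha>-1)" .
    then show ?thesis by (simp add: algebra_simps)
  qed
  show ?thesis using has_integral_eq[OF _ h4] eq val I_def by (metis (no_types, lifting))
qed


lemma dens_in: "a \<le> u \<Longrightarrow> u \<le> b \<Longrightarrow> beta_density \<alpha> a b u =
   KK \<alpha> * ((u-a) powr (\<alpha>-1) * (b-u) powr (\<alpha>-1)) / (b-a) powr (2*\<alpha>-1)"
proof -
  assume "a \<le> u" "u \<le> b"
  then have "beta_density \<alpha> a b u = Gamma (2*\<alpha>) * (u - a) powr (\<alpha> - 1) * (b - u) powr (\<alpha> - 1)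
          / (Gamma \<alpha> ^ 2 * (b - a) powr (2*\<alpha> - 1))" unfolding beta_density_def by simp
  also have "\<dots> = KK \<alpha> * ((u-a) powr (\<alpha>-1) * (b-u) powr (\<alpha>-1)) / (b-a) powr (2*\<alpha>-1)"
    unfolding KK_def by simp
  finally show ?thesis .
qed

lemma dens_out: "\<not> (a \<le> u \<and> u \<le> b) \<Longrightarrow> beta_density \<alpha> a b u = 0"
  unfolding beta_density_def by (rule if_not_P)

lemma dens_nonneg: "\<alpha> > 0 \<Longrightarrow> beta_density \<alpha> a b u \<ge> 0"
proof -
  assume a: "\<alpha> > 0"
  have "Gamma (2*\<alpha>) > 0" using a by auto
  then show ?thesis unfolding beta_density_def by auto
qed

lemma dens_meas: "(\<lambda>u. beta_density \<alpha> a b u) \<in> borel_measurable borel"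
  unfolding beta_density_def by measurable

definition Phi :: "real \<Rightarrow> real \<Rightarrow> real" where
  "Phi \<alpha> s0 = KK \<alpha> * integral {0..s0} (bt \<alpha>)"

lemma dens_int:
  assumes al: "\<alpha> > 0" and ab: "a < b" and s: "0 \<le> s0" "s0 \<le> 1"
  shows "(beta_density \<alpha> a b has_integral Phi \<alpha> s0) {a..a+s0*(b-a)}"
proof -
  define D where "D = (b-a) powr (2*\<alpha>-1)"
  have D: "D > 0" using ab by (simp add: D_def)
  note h = has_integral_mult_right[OF sub[OF al ab s], of "KK \<alpha> / D"]
  have eq: "KK \<alpha> / D * ((u-a) powr (\<alpha>-1) * (b-u) powr (\<alpha>-1)) = beta_density \<alpha> a b u"
    if u: "u \<in> {a..a+s0*(b-a)}" for u
  proof -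
    have "s0*(b-a) \<le> b-a" using s ab by (intro mult_left_le_one_le) auto
    then have "u \<le> b" "a \<le> u" using u by auto
    then show ?thesis by (simp add: dens_in D_def)
  qed
  have val: "KK \<alpha> / D * ((b - a) powr (2 * \<alpha> - 1) * integral {0..s0} (bt \<alpha>)) = Phi \<alpha> s0"
    using D unfolding Phi_def D_def by simp
  show ?thesis using has_integral_eq[OF _ h] eq val by (metis (no_types, lifting))
qed

lemma emeas:
  assumes "A \<in> sets borel"
  shows "emeasure (Beta_law \<alpha> a b) A = (\<integral>\<^sup>+u. ennreal (beta_density \<alpha> a b u) * indicator A u \<partial>lborel)"
  unfolding Beta_law_def using assms dens_meas[of \<alpha> a b]
  by (subst emeasure_density) auto

lemma sets_BL [simp]: "sets (Beta_law \<alpha> a b) = sets borel"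
  unfolding Beta_law_def by simp

lemma space_BL [simp]: "space (Beta_law \<alpha> a b) = UNIV"
  unfolding Beta_law_def by simp

lemma nn_Icc:
  assumes al: "\<alpha> > 0" and ab: "a < b" and s: "0 \<le> s0" "s0 \<le> 1"
  shows "(\<integral>\<^sup>+u. ennreal (beta_density \<alpha> a b u) * indicator {a..a+s0*(b-a)} u \<partial>lborel) = ennreal (Phi \<alpha> s0)"
  by (rule nn_integral_has_integral_lebesgue'[OF _ dens_int[OF al ab s]]) (use dens_nonneg[OF al] in auto)

lemma Phi1: "\<alpha> > 0 \<Longrightarrow> Phi \<alpha> 1 = 1"
  unfolding Phi_def using bt_int KK_Beta by (metis integral_unique)

lemma Phi_nonneg:
  assumes al: "\<alpha> \<ge> 1" and s: "0 \<le> s0" "s0 \<le> 1"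
  shows "Phi \<alpha> s0 \<ge> 0"
proof -
  have "integral {0..s0} (bt \<alpha>) \<ge> 0"
    by (rule integral_nonneg) (use bt_sub[of \<alpha> s0] al s in \<open>auto simp: bt_def\<close>)
  then show ?thesis unfolding Phi_def using KK_pos[of \<alpha>] al by simp
qed

lemma emeas_atMost:
  assumes al: "\<alpha> \<ge> 1" and ab: "a < b" and s: "0 \<le> s0" "s0 \<le> 1"
  shows "emeasure (Beta_law \<alpha> a b) {..a+s0*(b-a)} = ennreal (Phi \<alpha> s0)"
proof -
  have "emeasure (Beta_law \<alpha> a b) {..a+s0*(b-a)} =
     (\<integral>\<^sup>+u. ennreal (beta_density \<alpha> a b u) * indicator {a..a+s0*(b-a)} u \<partial>lborel)"
    by (subst emeas) (auto intro!: nn_integral_cong simp: indicator_def dens_out)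
  then show ?thesis using nn_Icc[of \<alpha> a b s0] al ab s by simp
qed

lemma prob_BL:
  assumes al: "\<alpha> \<ge> 1" and ab: "a < b"
  shows "prob_space (Beta_law \<alpha> a b)"
proof (rule prob_spaceI)
  have "emeasure (Beta_law \<alpha> a b) UNIV =
     (\<integral>\<^sup>+u. ennreal (beta_density \<alpha> a b u) * indicator {a..a+1*(b-a)} u \<partial>lborel)"
    by (subst emeas) (auto intro!: nn_integral_cong simp: indicator_def dens_out)
  then show "emeasure (Beta_law \<alpha> a b) (space (Beta_law \<alpha> a b)) = 1"
    using nn_Icc[of \<alpha> a b 1] Phi1[of \<alpha>] al ab by simp
qed

lemma tv_upper_abs:
  assumes PM: "prob_space M" and PN: "prob_space N"
    and sM: "sets M = sets borel" and sN: "sets N = sets borel"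
    and hm: "h \<in> borel_measurable borel"
    and hM: "\<And>A. A \<in> sets borel \<Longrightarrow> (\<integral>\<^sup>+u. ennreal (h u) * indicator A u \<partial>lborel) \<le> emeasure M A"
    and hN: "\<And>A. A \<in> sets borel \<Longrightarrow> (\<integral>\<^sup>+u. ennreal (h u) * indicator A u \<partial>lborel) \<le> emeasure N A"
    and hs: "(\<integral>\<^sup>+u. ennreal (h u) \<partial>lborel) = ennreal s" and s0: "s \<ge> 0"
    and A: "A \<in> sets borel"
  shows "measure M A - measure N A \<le> 1 - s"
proof -
  define B where "B = UNIV - A"
  have B: "B \<in> sets borel" using A by (auto simp: B_def)
  define HA where "HA = (\<integral>\<^sup>+u. ennreal (h u) * indicator A u \<partial>lborel)"
  define HB where "HB = (\<integral>\<^sup>+u. ennreal (h u) * indicator B u \<partial>lborel)"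
  have "HA + HB = (\<integral>\<^sup>+u. ennreal (h u) * indicator A u + ennreal (h u) * indicator B u \<partial>lborel)"
    unfolding HA_def HB_def using A B hm by (subst nn_integral_add) auto
  also have "\<dots> = (\<integral>\<^sup>+u. ennreal (h u) \<partial>lborel)"
    by (rule nn_integral_cong) (auto simp: B_def indicator_def)
  finally have sum: "HA + HB = ennreal s" using hs by simp
  have fa: "HA \<noteq> \<infinity>"
  proof
    assume "HA = \<infinity>" then have "HA + HB = \<infinity>" by simp
    then show False using sum by simp
  qed
  have fb: "HB \<noteq> \<infinity>"
  proof
    assume "HB = \<infinity>" then have "HA + HB = \<infinity>" by simp
    then show False using sum by simp
  qed
  define hA where "hA = enn2real HA"
  define hB where "hB = enn2real HB"
  have eA: "HA = ennreal hA" "hA \<ge> 0" using fa by (auto simp: hA_def ennreal_enn2real_if)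
  have eB: "HB = ennreal hB" "hB \<ge> 0" using fb by (auto simp: hB_def ennreal_enn2real_if)
  have e: "ennreal (hA + hB) = ennreal s" using sum eA eB ennreal_plus[of hA hB] by simp
  have hsum: "hA + hB = s" using ennreal_inj[of "hA+hB" s] e eA(2) eB(2) s0 by linarith
  interpret M: prob_space M by (rule PM)
  interpret N: prob_space N by (rule PN)
  have spM: "space M = UNIV" using sets_eq_imp_space_eq[OF sM] by simp
  have "ennreal hA \<le> ennreal (measure N A)"
    using hN[OF A] eA N.emeasure_eq_measure[of A] unfolding HA_def by simp
  then have 1: "hA \<le> measure N A" by simp
  have "ennreal hB \<le> ennreal (measure M B)"
    using hM[OF B] eB M.emeasure_eq_measure[of B] unfolding HB_def by simp
  then have 2: "hB \<le> measure M B" by simp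
  have 3: "measure M B = 1 - measure M A"
    using M.prob_compl[of A] A sM spM by (simp add: B_def)
  show ?thesis using 1 2 3 hsum by linarith
qed


definition kap :: "real \<Rightarrow> real" where "kap \<alpha> = KK \<alpha> / 4 powr (2*\<alpha>-2)"

lemma G_lower:
  assumes al: "\<alpha> \<ge> 1" and ab: "a < b" and u1: "(a+b)/2 < u" and u2: "u \<le> (a+b)/2 + (b-a)/4"
  shows "beta_density \<alpha> a b u \<ge> kap \<alpha> / (b-a)"
proof -
  define e where "e = (b-a)/4"
  have e0: "e > 0" using ab by (simp add: e_def)
  have 1: "e \<le> u - a" using u1 u2 ab unfolding e_def by (simp add: field_simps)
  have oneb: "e \<le> b - u" using u1 u2 ab unfolding e_def by (simp add: field_simps)
  note 1 = 1 oneb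
  have "e powr (\<alpha>-1) \<le> (u-a) powr (\<alpha>-1)" "e powr (\<alpha>-1) \<le> (b-u) powr (\<alpha>-1)"
    using 1 e0 al by (auto intro!: powr_mono2)
  then have G: "e powr (\<alpha>-1) * e powr (\<alpha>-1) \<le> (u-a) powr (\<alpha>-1) * (b-u) powr (\<alpha>-1)"
    by (intro mult_mono) auto
  have ee: "e powr (\<alpha>-1) * e powr (\<alpha>-1) = (b-a) powr (2*\<alpha>-2) / 4 powr (2*\<alpha>-2)"
  proof -
    have "e powr (\<alpha>-1) * e powr (\<alpha>-1) = e powr (2*\<alpha>-2)" by (simp add: powr_add[symmetric])
    also have "\<dots> = (b-a) powr (2*\<alpha>-2) / 4 powr (2*\<alpha>-2)" unfolding e_def using ab by (simp add: powr_divide)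
    finally show ?thesis .
  qed
  have ba: "(b-a) powr (2*\<alpha>-1) = (b-a) powr (2*\<alpha>-2) * (b-a)"
  proof -
    have x1: "(b-a) powr ((2*\<alpha>-2)+1) = (b-a) powr (2*\<alpha>-2) * (b-a) powr 1" by (rule powr_add)
    have x2: "(2*\<alpha>-2)+1 = 2*\<alpha>-1" by simp
    have x3: "(b-a) powr 1 = b-a" using ab by simp
    show ?thesis using x1 x2 x3 by metis
  qed
  have K: "KK \<alpha> > 0" using KK_pos[of \<alpha>] al by simp
  have P: "(b-a) powr (2*\<alpha>-1) > 0" using ab by simp
  have "kap \<alpha> / (b-a) = KK \<alpha> * ((b-a) powr (2*\<alpha>-2) / 4 powr (2*\<alpha>-2)) / (b-a) powr (2*\<alpha>-1)"
    unfolding kap_def ba using ab by (simp add: field_simps)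
  also have "\<dots> \<le> KK \<alpha> * ((u-a) powr (\<alpha>-1) * (b-u) powr (\<alpha>-1)) / (b-a) powr (2*\<alpha>-1)"
    using G ee K P by (intro divide_right_mono mult_left_mono) auto
  also have "\<dots> = beta_density \<alpha> a b u" using 1 e0 by (intro dens_in[symmetric]) auto
  finally show ?thesis .
qed

lemma lower_core:
  assumes al: "\<alpha> \<ge> 1" and ab: "a < b" and cd: "c < d" and ac: "a \<le> c" and bd: "b \<le> d"
  shows "measure (Beta_law \<alpha> a b) {..(c+d)/2} - measure (Beta_law \<alpha> c d) {..(c+d)/2}
     \<ge> kap \<alpha> / (b-a) * (min ((c+d)/2) ((a+b)/2 + (b-a)/4) - (a+b)/2)"
proof -
  define t where "t = (c+d)/2"
  define m where "m = (a+b)/2"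
  define t' where "t' = min t (m + (b-a)/4)"
  define k where "k = kap \<alpha> / (b-a)"
  have mt: "m \<le> t" using ac bd by (simp add: m_def t_def)
  have mt': "m \<le> t'" using mt ab by (simp add: t'_def)
  have k0: "k \<ge> 0" unfolding k_def kap_def using KK_pos[of \<alpha>] al ab by simp
  let ?f = "beta_density \<alpha> a b"
  interpret PM: prob_space "Beta_law \<alpha> a b" by (rule prob_BL[OF al ab])
  have P0: "Phi \<alpha> (1/2) \<ge> 0" using Phi_nonneg[of \<alpha> "1/2"] al by simp
  have Nt: "emeasure (Beta_law \<alpha> c d) {..t} = ennreal (Phi \<alpha> (1/2))"
    using emeas_atMost[of \<alpha> c d "1/2"] al cd by (simp add: t_def field_simps)
  have Mm: "emeasure (Beta_law \<alpha> a b) {..m} = ennreal (Phi \<alpha> (1/2))"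
    using emeas_atMost[of \<alpha> a b "1/2"] al ab by (simp add: m_def field_simps)
  have pw: "ennreal (?f u) * indicator {..m} u + ennreal k * indicator {m<..t'} u
            \<le> ennreal (?f u) * indicator {..t} u" for u
  proof (cases "u \<le> m")
    case True then show ?thesis using mt by (simp add: indicator_def)
  next
    case False
    show ?thesis
    proof (cases "u \<le> t'")
      case True
      then have "?f u \<ge> k" unfolding k_def using False G_lower[of \<alpha> a b u] al ab
        by (simp add: t'_def m_def)
      then show ?thesis using False True mt by (auto simp: indicator_def t'_def intro: ennreal_leI)
    next
      case F2: False
      then show ?thesis using False by (simp add: indicator_def)
    qed
  qed
  have "emeasure (Beta_law \<alpha> a b) {..m} + ennreal k * ennreal (t' - m)
      = (\<integral>\<^sup>+u. ennreal (?f u) * indicator {..m} u \<partial>lborel) + (\<integral>\<^sup>+u. ennreal k * indicator {m<..t'} u \<partial>lborel)"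
    using mt' by (simp add: emeas nn_integral_cmult_indicator)
  also have "\<dots> = (\<integral>\<^sup>+u. ennreal (?f u) * indicator {..m} u + ennreal k * indicator {m<..t'} u \<partial>lborel)"
    using dens_meas[of \<alpha> a b] by (subst nn_integral_add) auto
  also have "\<dots> \<le> (\<integral>\<^sup>+u. ennreal (?f u) * indicator {..t} u \<partial>lborel)"
    by (rule nn_integral_mono) (rule pw)
  also have "\<dots> = emeasure (Beta_law \<alpha> a b) {..t}" by (simp add: emeas)
  finally have "ennreal (Phi \<alpha> (1/2) + k * (t' - m)) \<le> ennreal (measure (Beta_law \<alpha> a b) {..t})"
    using Mm k0 mt' P0 PM.emeasure_eq_measure[of "{..t}"]
    by (simp add: ennreal_mult ennreal_plus)
  then have "Phi \<alpha> (1/2) + k * (t' - m) \<le> measure (Beta_law \<alpha> a b) {..t}"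
    by (simp add: ennreal_le_iff)
  moreover have "measure (Beta_law \<alpha> c d) {..t} = Phi \<alpha> (1/2)"
    using Nt P0 by (simp add: measure_def)
  ultimately show ?thesis unfolding t_def[symmetric] m_def[symmetric] t'_def[symmetric] k_def[symmetric] by simp
qed


lemma h_le:
  assumes al: "\<alpha> \<ge> 1" and ab: "a < b" and ac: "a \<le> c" and bd: "b \<le> d"
    and L: "b - a \<le> L" and u: "c \<le> u" "u \<le> b"
  shows "KK \<alpha> * ((u-c) powr (\<alpha>-1) * (b-u) powr (\<alpha>-1)) / L powr (2*\<alpha>-1) \<le> beta_density \<alpha> a b u"
proof -
  have K: "KK \<alpha> > 0" using KK_pos[of \<alpha>] al by simp
  have "(u-c) powr (\<alpha>-1) \<le> (u-a) powr (\<alpha>-1)" using al u ac by (intro powr_mono2) auto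
  then have G: "KK \<alpha> * ((u-c) powr (\<alpha>-1) * (b-u) powr (\<alpha>-1)) \<le> KK \<alpha> * ((u-a) powr (\<alpha>-1) * (b-u) powr (\<alpha>-1))"
    using K by (intro mult_left_mono mult_right_mono) auto
  have P: "(b-a) powr (2*\<alpha>-1) \<le> L powr (2*\<alpha>-1)" using al ab L by (intro powr_mono2) auto
  have P0: "(b-a) powr (2*\<alpha>-1) > 0" using ab by simp
  have "KK \<alpha> * ((u-c) powr (\<alpha>-1) * (b-u) powr (\<alpha>-1)) / L powr (2*\<alpha>-1)
     \<le> KK \<alpha> * ((u-a) powr (\<alpha>-1) * (b-u) powr (\<alpha>-1)) / (b-a) powr (2*\<alpha>-1)"
    by (rule frac_le) (use G P P0 K in auto)
  also have "\<dots> = beta_density \<alpha> a b u" using u ac by (intro dens_in[symmetric]) auto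
  finally show ?thesis .
qed

lemma h_le2:
  assumes al: "\<alpha> \<ge> 1" and cd: "c < d" and bd: "b \<le> d"
    and L: "d - c \<le> L" and u: "c \<le> u" "u \<le> b"
  shows "KK \<alpha> * ((u-c) powr (\<alpha>-1) * (b-u) powr (\<alpha>-1)) / L powr (2*\<alpha>-1) \<le> beta_density \<alpha> c d u"
proof -
  have K: "KK \<alpha> > 0" using KK_pos[of \<alpha>] al by simp
  have "(b-u) powr (\<alpha>-1) \<le> (d-u) powr (\<alpha>-1)" using al u bd by (intro powr_mono2) auto
  then have G: "KK \<alpha> * ((u-c) powr (\<alpha>-1) * (b-u) powr (\<alpha>-1)) \<le> KK \<alpha> * ((u-c) powr (\<alpha>-1) * (d-u) powr (\<alpha>-1))"
    using K by (intro mult_left_mono mult_left_mono) auto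
  have P: "(d-c) powr (2*\<alpha>-1) \<le> L powr (2*\<alpha>-1)" using al cd L by (intro powr_mono2) auto
  have P0: "(d-c) powr (2*\<alpha>-1) > 0" using cd by simp
  have "KK \<alpha> * ((u-c) powr (\<alpha>-1) * (b-u) powr (\<alpha>-1)) / L powr (2*\<alpha>-1)
     \<le> KK \<alpha> * ((u-c) powr (\<alpha>-1) * (d-u) powr (\<alpha>-1)) / (d-c) powr (2*\<alpha>-1)"
    by (rule frac_le) (use G P P0 K in auto)
  also have "\<dots> = beta_density \<alpha> c d u" using u bd by (intro dens_in[symmetric]) auto
  finally show ?thesis .
qed

lemma upper_core:
  assumes al: "\<alpha> \<ge> 1" and ab: "a < b" and cd: "c < d" and ac: "a \<le> c" and bd: "b \<le> d"
    and cb: "c < b" and A: "A \<in> sets borel"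
  shows "\<bar>measure (Beta_law \<alpha> a b) A - measure (Beta_law \<alpha> c d) A\<bar>
     \<le> 1 - ((b-c) / max (b-a) (d-c)) powr (2*\<alpha>-1)"
proof -
  define L where "L = max (b-a) (d-c)"
  have L0: "L > 0" using ab by (simp add: L_def)
  define H where "H u = KK \<alpha> * ((u-c) powr (\<alpha>-1) * (b-u) powr (\<alpha>-1)) / L powr (2*\<alpha>-1)" for u
  define h where "h u = H u * indicator {c..b} u" for u
  have K: "KK \<alpha> > 0" using KK_pos[of \<alpha>] al by simp
  have H0: "H u \<ge> 0" for u unfolding H_def using K by simp
  have hm: "h \<in> borel_measurable borel" unfolding h_def H_def by measurable
  have "((\<lambda>u. KK \<alpha> / L powr (2*\<alpha>-1) * ((u-c) powr (\<alpha>-1) * (b-u) powr (\<alpha>-1))) has_integral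
        KK \<alpha> / L powr (2*\<alpha>-1) * ((b-c) powr (2*\<alpha>-1) * integral {0..1} (bt \<alpha>))) {c..c+1*(b-c)}"
    by (rule has_integral_mult_right[OF sub]) (use al cb in auto)
  moreover have "integral {0..1} (bt \<alpha>) = Beta \<alpha> \<alpha>" using bt_int[of \<alpha>] al by (simp add: integral_unique)
  moreover have "KK \<alpha> / L powr (2*\<alpha>-1) * ((b-c) powr (2*\<alpha>-1) * Beta \<alpha> \<alpha>) = ((b-c)/L) powr (2*\<alpha>-1)"
    using KK_Beta[of \<alpha>] al cb L0 by (simp add: powr_divide)
  ultimately have hi: "(H has_integral ((b-c)/L) powr (2*\<alpha>-1)) {c..b}"
    unfolding H_def by (simp add: mult.commute)
  have hs: "(\<integral>\<^sup>+u. ennreal (h u) \<partial>lborel) = ennreal (((b-c)/L) powr (2*\<alpha>-1))"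
  proof -
    have "(\<integral>\<^sup>+u. ennreal (h u) \<partial>lborel) = (\<integral>\<^sup>+u. ennreal (H u) * indicator {c..b} u \<partial>lborel)"
      by (rule nn_integral_cong) (simp add: h_def indicator_def)
    also have "\<dots> = ennreal (((b-c)/L) powr (2*\<alpha>-1))"
      by (rule nn_integral_has_integral_lebesgue'[OF _ hi]) (use H0 in auto)
    finally show ?thesis .
  qed
  have hf: "h u \<le> beta_density \<alpha> a b u" for u
  proof (cases "c \<le> u \<and> u \<le> b")
    case True then show ?thesis unfolding h_def H_def using h_le[of \<alpha> a b c d L u] al ab ac bd
      by (simp add: L_def)
  next
    case False then show ?thesis unfolding h_def using dens_nonneg[of \<alpha> a b u] al by simp
  qed
  have hg: "h u \<le> beta_density \<alpha> c d u" for u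
  proof (cases "c \<le> u \<and> u \<le> b")
    case True then show ?thesis unfolding h_def H_def using h_le2[of \<alpha> c d b L u] al cd bd
      by (simp add: L_def)
  next
    case False then show ?thesis unfolding h_def using dens_nonneg[of \<alpha> c d u] al by simp
  qed
  have hM: "(\<integral>\<^sup>+u. ennreal (h u) * indicator B u \<partial>lborel) \<le> emeasure (Beta_law \<alpha> a b) B"
    if "B \<in> sets borel" for B
    using that by (subst emeas) (auto intro!: nn_integral_mono mult_right_mono ennreal_leI hf)
  have hN: "(\<integral>\<^sup>+u. ennreal (h u) * indicator B u \<partial>lborel) \<le> emeasure (Beta_law \<alpha> c d) B"
    if "B \<in> sets borel" for B
    using that by (subst emeas) (auto intro!: nn_integral_mono mult_right_mono ennreal_leI hg)
  have s0: "((b-c)/L) powr (2*\<alpha>-1) \<ge> 0" by simp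
  have PM: "prob_space (Beta_law \<alpha> a b)" using prob_BL al ab by blast
  have PN: "prob_space (Beta_law \<alpha> c d)" using prob_BL al cd by blast
  have 1: "measure (Beta_law \<alpha> a b) A - measure (Beta_law \<alpha> c d) A \<le> 1 - ((b-c)/L) powr (2*\<alpha>-1)"
    by (rule tv_upper_abs[OF PM PN _ _ hm hM hN hs s0 A]) auto
  have 2: "measure (Beta_law \<alpha> c d) A - measure (Beta_law \<alpha> a b) A \<le> 1 - ((b-c)/L) powr (2*\<alpha>-1)"
    by (rule tv_upper_abs[OF PN PM _ _ hm hN hM hs s0 A]) auto
  show ?thesis using 1 2 unfolding L_def by linarith
qed


lemma diff_le1:
  assumes al: "\<alpha> \<ge> 1" and ab: "a < b" and cd: "c < d"
  shows "\<bar>measure (Beta_law \<alpha> a b) A - measure (Beta_law \<alpha> c d) A\<bar> \<le> 1"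
proof -
  interpret M: prob_space "Beta_law \<alpha> a b" by (rule prob_BL[OF al ab])
  interpret N: prob_space "Beta_law \<alpha> c d" by (rule prob_BL[OF al cd])
  have "measure (Beta_law \<alpha> a b) A \<le> 1" "measure (Beta_law \<alpha> c d) A \<le> 1"
    by (rule M.prob_le_1, rule N.prob_le_1)
  moreover have "measure (Beta_law \<alpha> a b) A \<ge> 0" "measure (Beta_law \<alpha> c d) A \<ge> 0" by auto
  ultimately show ?thesis by linarith
qed

lemma tv_le:
  assumes "\<And>A. A \<in> sets borel \<Longrightarrow> \<bar>measure M A - measure N A\<bar> \<le> B"
  shows "tv_dist M N \<le> B"
  unfolding tv_dist_def by (rule cSUP_least) (use assms in auto)

lemma tv_ge:
  assumes al: "\<alpha> \<ge> 1" and ab: "a < b" and cd: "c < d" and A: "A \<in> sets borel"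
  shows "\<bar>measure (Beta_law \<alpha> a b) A - measure (Beta_law \<alpha> c d) A\<bar> \<le> tv_dist (Beta_law \<alpha> a b) (Beta_law \<alpha> c d)"
  unfolding tv_dist_def
proof (rule cSUP_upper[OF A])
  show "bdd_above ((\<lambda>A. \<bar>measure (Beta_law \<alpha> a b) A - measure (Beta_law \<alpha> c d) A\<bar>) ` sets borel)"
    using diff_le1[OF al ab cd] by (intro bdd_aboveI[of _ 1]) auto
qed


lemma core_upper:
  assumes al: "\<alpha> \<ge> 1" and ab: "a < b" and cd: "c < d" and ac: "a \<le> c" and bd: "b \<le> d"
  shows "tv_dist (Beta_law \<alpha> a b) (Beta_law \<alpha> c d) \<le>
     max 2 (2 * real (nat \<lceil>2*\<alpha>-1\<rceil>)) * min ((((c+d) - (a+b))/2) / max (b-a) (d-c)) 1"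
proof -
  define q where "q = tv_dist (Beta_law \<alpha> a b) (Beta_law \<alpha> c d)"
  define dX where "dX = ((c+d) - (a+b))/2"
  define L where "L = max (b-a) (d-c)"
  define n where "n = nat \<lceil>2*\<alpha>-1\<rceil>"
  define C where "C = max 2 (2 * real n)"
  define Q where "Q = min (dX / L) 1"
  have L0: "L > 0" using ab by (simp add: L_def)
  have dX0: "dX \<ge> 0" using ac bd by (simp add: dX_def)
  have q1: "q \<le> 1" unfolding q_def by (rule tv_le) (rule diff_le1[OF al ab cd])
  have C2: "C \<ge> 2" "C \<ge> 2 * real n" by (auto simp: C_def)
  have "q \<le> C * Q"
  proof (cases "b \<le> c")
    case True
    have "L \<le> 2 * dX" using True ac bd unfolding L_def dX_def max_def by simp
    then have "dX / L \<ge> 1/2" using L0 by (simp add: field_simps)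
    then have "Q \<ge> 1/2" by (simp add: Q_def)
    then have "C * Q \<ge> 2 * (1/2)" using C2 by (intro mult_mono) auto
    then show ?thesis using q1 by simp
  next
    case False
    then have cb: "c < b" by simp
    define r where "r = (b-c)/L"
    have r0: "r > 0" using cb L0 by (simp add: r_def)
    have r1: "r \<le> 1" using L0 ac by (simp add: r_def L_def field_simps)
    have qr: "q \<le> 1 - r powr (2*\<alpha>-1)" unfolding q_def r_def L_def
      by (rule tv_le) (rule upper_core[OF al ab cd ac bd cb])
    have "0 \<le> \<lceil>2*\<alpha>-1\<rceil>" using al by simp
    then have "real n = of_int \<lceil>2*\<alpha>-1\<rceil>" unfolding n_def by simp
    then have pn: "2*\<alpha>-1 \<le> real n" using le_of_int_ceiling[of "2*\<alpha>-1"] by simp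
    moreover have "r powr (real n) \<le> r powr (2*\<alpha>-1)"
      by (rule powr_mono') (use r0 r1 pn in auto)
    moreover have "r powr (real n) = r ^ n" using r0 by (simp add: powr_realpow)
    moreover have "1 + real n * (r - 1) \<le> (1 + (r - 1)) ^ n"
      by (rule Bernoulli_inequality) (use r0 in auto)
    ultimately have q2: "q \<le> real n * (1 - r)" using qr by (simp add: algebra_simps)
    have "1 - r = (L - (b - c)) / L" using L0 by (simp add: r_def field_simps)
    also have "\<dots> \<le> (2*dX) / L"
    proof (rule divide_right_mono)
      have "L \<le> d - a" unfolding L_def using ac bd by simp
      then show "L - (b - c) \<le> 2 * dX" unfolding dX_def by simp
    qed (use L0 in simp)
    finally have "1 - r \<le> 2 * (dX / L)" by simp
    then have "real n * (1 - r) \<le> real n * (2 * (dX / L))" by (intro mult_left_mono) auto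
    moreover have "real n * (2 * (dX / L)) = 2 * real n * (dX / L)" by simp
    ultimately have q3: "q \<le> 2 * real n * (dX / L)" using q2 by (metis order.trans)
    show ?thesis
    proof (cases "dX / L \<le> 1")
      case True
      then have "Q = dX / L" by (simp add: Q_def)
      moreover have "2 * real n * (dX / L) \<le> C * (dX / L)"
        using C2 dX0 L0 by (intro mult_right_mono) auto
      ultimately show ?thesis using q3 by simp
    next
      case False
      then have "Q = 1" by (simp add: Q_def)
      then show ?thesis using q1 C2 by simp
    qed
  qed
  then show ?thesis unfolding q_def C_def Q_def dX_def L_def n_def .
qed


lemma kap_pos: "\<alpha> \<ge> 1 \<Longrightarrow> kap \<alpha> > 0"
  unfolding kap_def using KK_pos[of \<alpha>] by simp

lemma core_lower:
  assumes al: "\<alpha> \<ge> 1" and ab: "a < b" and cd: "c < d" and ac: "a \<le> c" and bd: "b \<le> d"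
  shows "kap \<alpha> / 4 * min ((((c+d) - (a+b))/2) / max (b-a) (d-c)) 1
     \<le> tv_dist (Beta_law \<alpha> a b) (Beta_law \<alpha> c d)"
proof -
  define q where "q = tv_dist (Beta_law \<alpha> a b) (Beta_law \<alpha> c d)"
  define dX where "dX = ((c+d) - (a+b))/2"
  define L where "L = max (b-a) (d-c)"
  define Q where "Q = min (dX / L) 1"
  define K where "K = kap \<alpha>"
  have K0: "K > 0" using kap_pos[OF al] by (simp add: K_def)
  have L0: "L > 0" using ab by (simp add: L_def)
  have bL: "b - a \<le> L" by (simp add: L_def)
  have dX0: "dX \<ge> 0" using ac bd by (simp add: dX_def)
  have Q0: "Q \<ge> 0" using dX0 L0 by (simp add: Q_def)
  have "K / (b-a) * (min ((c+d)/2) ((a+b)/2 + (b-a)/4) - (a+b)/2)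
        \<le> measure (Beta_law \<alpha> a b) {..(c+d)/2} - measure (Beta_law \<alpha> c d) {..(c+d)/2}"
    unfolding K_def by (rule lower_core[OF al ab cd ac bd])
  also have "\<dots> \<le> q" unfolding q_def using tv_ge[OF al ab cd, of "{..(c+d)/2}"] by simp
  finally have q1: "K / (b-a) * (min ((c+d)/2) ((a+b)/2 + (b-a)/4) - (a+b)/2) \<le> q" .
  have "K / 4 * Q \<le> q"
  proof (cases "dX \<le> (b-a)/4")
    case True
    then have "(c+d)/2 \<le> (a+b)/2 + (b-a)/4" unfolding dX_def by (simp add: field_simps)
    then have "min ((c+d)/2) ((a+b)/2 + (b-a)/4) = (c+d)/2" by (rule min_absorb1)
    then have "min ((c+d)/2) ((a+b)/2 + (b-a)/4) - (a+b)/2 = dX" unfolding dX_def by (simp add: field_simps)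
    then have "K / (b-a) * dX \<le> q" using q1 by simp
    moreover have "K * (dX / L) \<le> K / (b-a) * dX"
    proof -
      have "dX / L \<le> dX / (b-a)" using dX0 ab bL by (intro divide_left_mono) auto
      then have "K * (dX / L) \<le> K * (dX / (b-a))" using K0 by (intro mult_left_mono) auto
      then show ?thesis by simp
    qed
    moreover have "K / 4 * Q \<le> K * (dX / L)"
    proof -
      have "Q \<le> dX / L" by (simp add: Q_def)
      then have "K * Q \<le> K * (dX / L)" using K0 by (intro mult_left_mono) auto
      moreover have "K / 4 * Q \<le> K * Q" using K0 Q0 by simp
      ultimately show ?thesis by linarith
    qed
    ultimately show ?thesis by linarith
  next
    case False
    then have "(c+d)/2 \<ge> (a+b)/2 + (b-a)/4" unfolding dX_def by (simp add: field_simps)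
    then have "min ((c+d)/2) ((a+b)/2 + (b-a)/4) = (a+b)/2 + (b-a)/4" by (rule min_absorb2)
    then have "min ((c+d)/2) ((a+b)/2 + (b-a)/4) - (a+b)/2 = (b-a)/4" by simp
    then have "K / (b-a) * ((b-a)/4) \<le> q" using q1 by (simp only:)
    moreover have "K / (b-a) * ((b-a)/4) = K / 4" using ab by simp
    ultimately have "K / 4 \<le> q" by simp
    moreover have "Q \<le> 1" by (simp add: Q_def)
    then have "K / 4 * Q \<le> K / 4" using K0 by (simp add: mult_left_le)
    ultimately show ?thesis by linarith
  qed
  then show ?thesis unfolding K_def Q_def dX_def L_def q_def .
qed


lemma len_Icc: "len {l..u} = (if l \<le> u then u - l else 0)"
  unfolding len_def measure_def by (simp add: emeasure_lborel_Icc_eq)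

lemma core_second:
  assumes al: "\<alpha> \<ge> 1" and ab: "a < b" and cd: "c < d" and ac: "a \<le> c" and bd: "b \<le> d"
    and q: "tv_dist (Beta_law \<alpha> a b) (Beta_law \<alpha> c d) \<ge> 1 - (1/2) powr (2*\<alpha>-1)"
  shows "max (len {a..b}) (len {c..d}) \<ge> 2 * len ({a..b} \<inter> {c..d})"
proof -
  define L where "L = max (b-a) (d-c)"
  have L0: "L > 0" using ab by (simp add: L_def)
  have hML: "max (len {a..b}) (len {c..d}) = L" using ab cd by (simp add: len_Icc L_def)
  have I: "{a..b} \<inter> {c..d} = {c..b}" using ac bd by simp
  show ?thesis
  proof (cases "c < b")
    case False
    then have "len ({a..b} \<inter> {c..d}) = 0" unfolding I len_Icc by auto
    then show ?thesis using hML L0 by simp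
  next
    case True
    have li: "len ({a..b} \<inter> {c..d}) = b - c" unfolding I len_Icc using True by simp
    show ?thesis
    proof (rule ccontr)
      assume "\<not> ?thesis"
      then have lt: "L < 2 * (b - c)" using hML li by simp
      have r: "1/2 < (b-c)/L" using lt L0 by (simp add: field_simps)
      have "(1/2) powr (2*\<alpha>-1) < ((b-c)/L) powr (2*\<alpha>-1)"
        by (rule powr_less_mono2) (use al r in auto)
      moreover have "tv_dist (Beta_law \<alpha> a b) (Beta_law \<alpha> c d) \<le> 1 - ((b-c)/L) powr (2*\<alpha>-1)"
        unfolding L_def by (rule tv_le) (rule upper_core[OF al ab cd ac bd True])
      ultimately show False using q by linarith
    qed
  qed
qed

theorem lemma5p3:
  fixes \<alpha> :: real
  assumes "\<alpha> \<ge> 1"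
  shows
  "(\<exists>C>0. \<forall>N k (x::nat\<Rightarrow>real) (y::nat\<Rightarrow>real).
      N \<ge> 2 \<longrightarrow> 1 \<le> k \<longrightarrow> k \<le> N - 1 \<longrightarrow> Omega N x \<longrightarrow> Omega N y \<longrightarrow>
      (\<forall>i\<le>N. x i \<le> y i) \<longrightarrow> x (k+1) > x (k-1) \<longrightarrow> y (k+1) > y (k-1) \<longrightarrow>
      (let q = tv_dist (Beta_law \<alpha> (x (k-1)) (x (k+1))) (Beta_law \<alpha> (y (k-1)) (y (k+1)));
           dX = ((y (k-1) + y (k+1)) - (x (k-1) + x (k+1))) / 2;
           Q = min (dX / max (x (k+1) - x (k-1)) (y (k+1) - y (k-1))) 1
       in Q / C \<le> q \<and> q \<le> C * Q))
   \<and>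
   (\<exists>c1>0. \<forall>N k (x::nat\<Rightarrow>real) (y::nat\<Rightarrow>real).
      N \<ge> 2 \<longrightarrow> 1 \<le> k \<longrightarrow> k \<le> N - 1 \<longrightarrow> Omega N x \<longrightarrow> Omega N y \<longrightarrow>
      (\<forall>i\<le>N. x i \<le> y i) \<longrightarrow> x (k+1) > x (k-1) \<longrightarrow> y (k+1) > y (k-1) \<longrightarrow>
      tv_dist (Beta_law \<alpha> (x (k-1)) (x (k+1))) (Beta_law \<alpha> (y (k-1)) (y (k+1))) \<ge> 1 - c1 \<longrightarrow>
      max (len {x (k-1)..x (k+1)}) (len {y (k-1)..y (k+1)})
        \<ge> 2 * len ({x (k-1)..x (k+1)} \<inter> {y (k-1)..y (k+1)}))"
proof -
  define C1 where "C1 = max 2 (2 * real (nat \<lceil>2*\<alpha>-1\<rceil>))"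
  define C where "C = max C1 (4 / kap \<alpha>)"
  have kp: "kap \<alpha> > 0" using kap_pos[OF assms] .
  have CC1: "C \<ge> C1" and CK: "C \<ge> 4 / kap \<alpha>" by (auto simp: C_def)
  have C0: "C > 0" using CC1 by (simp add: C1_def)
  have P1: "\<forall>N k (x::nat\<Rightarrow>real) (y::nat\<Rightarrow>real).
      N \<ge> 2 \<longrightarrow> 1 \<le> k \<longrightarrow> k \<le> N - 1 \<longrightarrow> Omega N x \<longrightarrow> Omega N y \<longrightarrow>
      (\<forall>i\<le>N. x i \<le> y i) \<longrightarrow> x (k+1) > x (k-1) \<longrightarrow> y (k+1) > y (k-1) \<longrightarrow>
      (let q = tv_dist (Beta_law \<alpha> (x (k-1)) (x (k+1))) (Beta_law \<alpha> (y (k-1)) (y (k+1)));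
           dX = ((y (k-1) + y (k+1)) - (x (k-1) + x (k+1))) / 2;
           Q = min (dX / max (x (k+1) - x (k-1)) (y (k+1) - y (k-1))) 1
       in Q / C \<le> q \<and> q \<le> C * Q)"
  proof (intro allI impI)
    fix N k and x y :: "nat \<Rightarrow> real"
    assume N: "N \<ge> 2" and k1: "1 \<le> k" and kN: "k \<le> N - 1" and "Omega N x" "Omega N y"
      and xy: "\<forall>i\<le>N. x i \<le> y i" and ab: "x (k+1) > x (k-1)" and cd: "y (k+1) > y (k-1)"
    have i1: "k - 1 \<le> N" and i2: "k + 1 \<le> N" using N k1 kN by auto
    have ac: "x (k-1) \<le> y (k-1)" using xy i1 by blast
    have bd: "x (k+1) \<le> y (k+1)" using xy i2 by blast
    define q where "q = tv_dist (Beta_law \<alpha> (x (k-1)) (x (k+1))) (Beta_law \<alpha> (y (k-1)) (y (k+1)))"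
    define Q where "Q = min (((y (k-1) + y (k+1)) - (x (k-1) + x (k+1))) / 2 / max (x (k+1) - x (k-1)) (y (k+1) - y (k-1))) 1"
    have Q0: "Q \<ge> 0" using ac bd ab by (simp add: Q_def)
    have up: "q \<le> C1 * Q" unfolding q_def Q_def C1_def
      using core_upper[OF assms ab cd ac bd] by simp
    have lo: "kap \<alpha> / 4 * Q \<le> q" unfolding q_def Q_def
      using core_lower[OF assms ab cd ac bd] by simp
    have "C1 * Q \<le> C * Q" using CC1 Q0 by (intro mult_right_mono) auto
    then have r1: "q \<le> C * Q" using up by linarith
    have r2a: "Q / C \<le> Q / (4 / kap \<alpha>)"
      using Q0 CK kp C0 by (intro divide_left_mono) (auto intro!: mult_pos_pos)
    have r2b: "Q / (4 / kap \<alpha>) = kap \<alpha> / 4 * Q" by simp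
    have r2: "Q / C \<le> q" using r2a r2b lo by linarith
    note r1 r2
    show "let q = tv_dist (Beta_law \<alpha> (x (k-1)) (x (k+1))) (Beta_law \<alpha> (y (k-1)) (y (k+1)));
           dX = ((y (k-1) + y (k+1)) - (x (k-1) + x (k+1))) / 2;
           Q = min (dX / max (x (k+1) - x (k-1)) (y (k+1) - y (k-1))) 1
       in Q / C \<le> q \<and> q \<le> C * Q" using r1 r2 unfolding Let_def q_def Q_def by simp
  qed
  have P2: "\<forall>N k (x::nat\<Rightarrow>real) (y::nat\<Rightarrow>real).
      N \<ge> 2 \<longrightarrow> 1 \<le> k \<longrightarrow> k \<le> N - 1 \<longrightarrow> Omega N x \<longrightarrow> Omega N y \<longrightarrow>
      (\<forall>i\<le>N. x i \<le> y i) \<longrightarrow> x (k+1) > x (k-1) \<longrightarrow> y (k+1) > y (k-1) \<longrightarrow>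
      tv_dist (Beta_law \<alpha> (x (k-1)) (x (k+1))) (Beta_law \<alpha> (y (k-1)) (y (k+1))) \<ge> 1 - (1/2) powr (2*\<alpha>-1) \<longrightarrow>
      max (len {x (k-1)..x (k+1)}) (len {y (k-1)..y (k+1)})
        \<ge> 2 * len ({x (k-1)..x (k+1)} \<inter> {y (k-1)..y (k+1)})"
  proof (intro allI impI)
    fix N k and x y :: "nat \<Rightarrow> real"
    assume N: "N \<ge> 2" and k1: "1 \<le> k" and kN: "k \<le> N - 1" and "Omega N x" "Omega N y"
      and xy: "\<forall>i\<le>N. x i \<le> y i" and ab: "x (k+1) > x (k-1)" and cd: "y (k+1) > y (k-1)"
      and q: "tv_dist (Beta_law \<alpha> (x (k-1)) (x (k+1))) (Beta_law \<alpha> (y (k-1)) (y (k+1))) \<ge> 1 - (1/2) powr (2*\<alpha>-1)"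
    have i1: "k - 1 \<le> N" and i2: "k + 1 \<le> N" using N k1 kN by auto
    have ac: "x (k-1) \<le> y (k-1)" using xy i1 by blast
    have bd: "x (k+1) \<le> y (k+1)" using xy i2 by blast
    show "max (len {x (k-1)..x (k+1)}) (len {y (k-1)..y (k+1)})
        \<ge> 2 * len ({x (k-1)..x (k+1)} \<inter> {y (k-1)..y (k+1)})"
      by (rule core_second[OF assms ab cd ac bd q])
  qed
  have c0: "(1/2::real) powr (2*\<alpha>-1) > 0" by simp
  show ?thesis
    using P1 P2 C0 c0 by blast
qed

end
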